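(* There is a universal constant $\alpha>1$ such that the following holds. Let $p\ge 2$ and $k\ge1$ be integers and put $r=r(p,k)=\alpha\, p\log(pk)$. Let $n\ge 1$ and let $S_1,\dots,S_\ell\subseteq[n]$ be a sequence of sets, each of size $k$, with $\ell> r^k$, which is $r$-spread. Then there are $p$ distinct indices $i_1,\dots,i_p\in[\ell]$ such that $S_{i_1},\dots,S_{i_p}$ are pairwise disjoint.
   Context: A sequence (repetitions allowed) of sets $S_1,\dots,S_\ell\subseteq[n]$, each of size $k$, is called $r$-spread if for every non-empty set $Z\subseteq[n]$, the number of indices $i\in[\ell]$ with $Z\subseteq S_i$ is at most $r^{k-|Z|}$. All logarithms are base $2$. *)

theory Defs
  imports "HOL-Analysis.Analysis"
begin

definition r_spread :: "nat \<Rightarrow> nat \<Rightarrow> real \<Rightarrow> nat \<Rightarrow> (nat \<Rightarrow> nat set) \<Rightarrow> bool" where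
  "r_spread n k r l S \<longleftrightarrow>
     (\<forall>Z. Z \<subseteq> {1..n} \<longrightarrow> Z \<noteq> {} \<longrightarrow>
        real (card {i. i < l \<and> Z \<subseteq> S i}) \<le> r powr (real k - real (card Z)))"

end

theory Submission
  imports Defs
begin

definition mu :: "real \<Rightarrow> nat set \<Rightarrow> nat set \<Rightarrow> real" where
  "mu \<rho> U W = \<rho> ^ card W * (1 - \<rho>) ^ card (U - W)"

definition Esum :: "real \<Rightarrow> nat set \<Rightarrow> (nat set \<Rightarrow> real) \<Rightarrow> real" where
  "Esum \<rho> U f = (\<Sum>W\<in>Pow U. mu \<rho> U W * f W)"

lemma mu_nonneg: "0 \<le> \<rho> \<Longrightarrow> \<rho> \<le> 1 \<Longrightarrow> 0 \<le> mu \<rho> U W"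
  unfolding mu_def by simp

lemma Esum_insert:
  assumes "finite U" "x \<notin> U"
  shows "Esum \<rho> (insert x U) f = (1 - \<rho>) * Esum \<rho> U f + \<rho> * Esum \<rho> U (\<lambda>W. f (insert x W))"
proof -
  have disj: "Pow U \<inter> insert x ` Pow U = {}" using assms(2) by auto
  have inj: "inj_on (insert x) (Pow U)"
    using assms(2) unfolding inj_on_def by (metis PowD Diff_insert_absorb in_mono)
  have m1: "mu \<rho> (insert x U) W = (1 - \<rho>) * mu \<rho> U W" if "W \<in> Pow U" for W
  proof -
    have "insert x U - W = insert x (U - W)" using that assms by auto
    moreover have "x \<notin> U - W" using assms by auto
    moreover have "finite (U - W)" using assms by auto
    ultimately show ?thesis unfolding mu_def by simp
  qed
  have m2: "mu \<rho> (insert x U) (insert x W) = \<rho> * mu \<rho> U W" if "W \<in> Pow U" for W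
  proof -
    have "insert x U - insert x W = U - W" using that assms by auto
    moreover have "x \<notin> W" using assms that by auto
    moreover have "finite W" using assms that finite_subset by auto
    ultimately show ?thesis unfolding mu_def by simp
  qed
  have fin: "finite (Pow U)" using assms by simp
  have "Esum \<rho> (insert x U) f = (\<Sum>W\<in>Pow U. mu \<rho> (insert x U) W * f W)
        + (\<Sum>W\<in>insert x ` Pow U. mu \<rho> (insert x U) W * f W)"
    unfolding Esum_def Pow_insert by (rule sum.union_disjoint) (use fin disj in auto)
  also have "(\<Sum>W\<in>insert x ` Pow U. mu \<rho> (insert x U) W * f W)
      = (\<Sum>W\<in>Pow U. mu \<rho> (insert x U) (insert x W) * f (insert x W))"
    by (subst sum.reindex[OF inj]) simp
  also have "\<dots> = \<rho> * Esum \<rho> U (\<lambda>W. f (insert x W))"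
    unfolding Esum_def sum_distrib_left by (rule sum.cong) (auto simp: m2)
  also have "(\<Sum>W\<in>Pow U. mu \<rho> (insert x U) W * f W) = (1 - \<rho>) * Esum \<rho> U f"
    unfolding Esum_def sum_distrib_left by (rule sum.cong) (auto simp: m1)
  finally show ?thesis .
qed

lemma Esum_empty: "Esum \<rho> {} f = f {}"
  unfolding Esum_def mu_def by simp

lemma Esum_one: "finite U \<Longrightarrow> Esum \<rho> U (\<lambda>_. c) = c"
proof (induction U rule: finite_induct)
  case empty then show ?case by (simp add: Esum_empty)
next
  case (insert x U) then show ?case by (simp add: Esum_insert algebra_simps)
qed

lemma Esum_add: "Esum \<rho> U (\<lambda>W. f W + g W) = Esum \<rho> U f + Esum \<rho> U g"
  unfolding Esum_def by (simp add: algebra_simps sum.distrib)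

lemma Esum_cmult: "Esum \<rho> U (\<lambda>W. c * f W) = c * Esum \<rho> U f"
  unfolding Esum_def by (simp add: algebra_simps sum_distrib_left)

lemma Esum_mono:
  assumes "0 \<le> \<rho>" "\<rho> \<le> 1" "\<And>W. W \<subseteq> U \<Longrightarrow> f W \<le> g W"
  shows "Esum \<rho> U f \<le> Esum \<rho> U g"
  unfolding Esum_def by (rule sum_mono) (use assms mu_nonneg in \<open>auto intro: mult_left_mono\<close>)

lemma Esum_cong:
  assumes "\<And>W. W \<subseteq> U \<Longrightarrow> f W = g W"
  shows "Esum \<rho> U f = Esum \<rho> U g"
  unfolding Esum_def by (rule sum.cong) (use assms in auto)

lemma Esum_union:
  assumes "finite U"
  shows "Esum \<alpha> U (\<lambda>W1. Esum \<beta> U (\<lambda>W2. f (W1 \<union> W2))) = Esum (\<alpha> + \<beta> - \<alpha> * \<beta>) U f"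
  using assms
proof (induction U arbitrary: f rule: finite_induct)
  case empty then show ?case by (simp add: Esum_empty)
next
  case (insert x U f)
  have "Esum \<alpha> (insert x U) (\<lambda>W1. Esum \<beta> (insert x U) (\<lambda>W2. f (W1 \<union> W2)))
     = Esum \<alpha> (insert x U) (\<lambda>W1. (1 - \<beta>) * Esum \<beta> U (\<lambda>W2. f (W1 \<union> W2))
           + \<beta> * Esum \<beta> U (\<lambda>W2. f (insert x (W1 \<union> W2))))"
    using insert by (simp add: Esum_insert)
  also have "\<dots> = (1 - \<beta>) * Esum \<alpha> (insert x U) (\<lambda>W1. Esum \<beta> U (\<lambda>W2. f (W1 \<union> W2)))
        + \<beta> * Esum \<alpha> (insert x U) (\<lambda>W1. Esum \<beta> U (\<lambda>W2. f (insert x (W1 \<union> W2))))"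
    by (simp add: Esum_add Esum_cmult)
  also have "\<dots> = (1 - \<beta>) * ((1 - \<alpha>) * Esum \<alpha> U (\<lambda>W1. Esum \<beta> U (\<lambda>W2. f (W1 \<union> W2)))
          + \<alpha> * Esum \<alpha> U (\<lambda>W1. Esum \<beta> U (\<lambda>W2. f (insert x (W1 \<union> W2)))))
        + \<beta> * ((1 - \<alpha>) * Esum \<alpha> U (\<lambda>W1. Esum \<beta> U (\<lambda>W2. f (insert x (W1 \<union> W2))))
          + \<alpha> * Esum \<alpha> U (\<lambda>W1. Esum \<beta> U (\<lambda>W2. f (insert x (W1 \<union> W2)))))"
    using insert by (simp add: Esum_insert)
  also have "\<dots> = (1 - (\<alpha> + \<beta> - \<alpha> * \<beta>)) * Esum (\<alpha> + \<beta> - \<alpha> * \<beta>) U f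
       + (\<alpha> + \<beta> - \<alpha> * \<beta>) * Esum (\<alpha> + \<beta> - \<alpha> * \<beta>) U (\<lambda>W. f (insert x W))"
    using insert.IH[of f] insert.IH[of "\<lambda>W. f (insert x W)"] by (simp add: algebra_simps)
  also have "\<dots> = Esum (\<alpha> + \<beta> - \<alpha> * \<beta>) (insert x U) f"
    using insert by (simp add: Esum_insert)
  finally show ?case .
qed



definition cand :: "nat set \<Rightarrow> (nat \<Rightarrow> nat set) \<Rightarrow> nat set \<Rightarrow> nat \<Rightarrow> nat set" where
  "cand I A W i = {j\<in>I. A j \<subseteq> W \<union> A i}"

definition tv :: "nat set \<Rightarrow> (nat \<Rightarrow> nat set) \<Rightarrow> nat set \<Rightarrow> nat \<Rightarrow> nat" where
  "tv I A W i = Min ((\<lambda>j. card (A j - W)) ` cand I A W i)"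

definition jstar :: "nat set \<Rightarrow> (nat \<Rightarrow> nat set) \<Rightarrow> nat set \<Rightarrow> nat \<Rightarrow> nat" where
  "jstar I A W i = (SOME j. j \<in> cand I A W i \<and> card (A j - W) = tv I A W i)"

lemma tv_le:
  assumes "finite I" "j \<in> cand I A W i"
  shows "tv I A W i \<le> card (A j - W)"
  unfolding tv_def using assms by (auto simp: cand_def intro!: Min_le)

lemma jstar_props:
  assumes "finite I" "i \<in> I"
  shows "jstar I A W i \<in> cand I A W i \<and> card (A (jstar I A W i) - W) = tv I A W i"
proof -
  have ne: "cand I A W i \<noteq> {}" using assms by (auto simp: cand_def)
  have fin: "finite (cand I A W i)" using assms by (auto simp: cand_def)
  have "tv I A W i \<in> (\<lambda>j. card (A j - W)) ` cand I A W i"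
    unfolding tv_def using ne fin by (intro Min_in) auto
  then obtain j where "j \<in> cand I A W i \<and> card (A j - W) = tv I A W i" by force
  then show ?thesis unfolding jstar_def by (rule someI)
qed

lemma tv_le_self:
  assumes "finite I" "i \<in> I"
  shows "tv I A W i \<le> card (A i - W)"
  using assms by (intro tv_le) (auto simp: cand_def)

definition cidx :: "nat set \<Rightarrow> (nat \<Rightarrow> nat set) \<Rightarrow> nat set \<Rightarrow> nat" where
  "cidx I A Z = (SOME j. j \<in> I \<and> A j \<subseteq> Z)"

lemma mu_shift:
  assumes "finite U" "W \<subseteq> U" "T \<subseteq> U" "W \<inter> T = {}" "card T = t" "0 < \<rho>" "\<rho> \<le> 1"
  shows "mu \<rho> U W \<le> mu \<rho> U (W \<union> T) / \<rho> ^ t"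
proof -
  have fW: "finite W" "finite T" using assms finite_subset by auto
  have c1: "card (W \<union> T) = card W + t" using assms fW by (simp add: card_Un_disjoint)
  have c2: "card (U - W) = card (U - (W \<union> T)) + t"
  proof -
    have e: "U - W = (U - (W \<union> T)) \<union> T" using assms by auto
    have "card ((U - (W \<union> T)) \<union> T) = card (U - (W \<union> T)) + card T"
      by (rule card_Un_disjoint) (use assms fW in auto)
    then show ?thesis using e assms by simp
  qed
  have "mu \<rho> U W * \<rho> ^ t = \<rho> ^ (card W + t) * (1 - \<rho>) ^ (card (U - (W \<union> T)) + t)"
    unfolding mu_def c2 by (simp add: power_add)
  also have "\<dots> \<le> \<rho> ^ (card W + t) * (1 - \<rho>) ^ (card (U - (W \<union> T)))"
    using assms by (intro mult_left_mono power_decreasing) auto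
  also have "\<dots> = mu \<rho> U (W \<union> T)" unfolding mu_def c1 ..
  finally show ?thesis using assms by (simp add: field_simps)
qed

lemma encoding:
  assumes finU: "finite U" and finI: "finite I"
    and AU: "\<And>i. i \<in> I \<Longrightarrow> A i \<subseteq> U" and Aa: "\<And>i. i \<in> I \<Longrightarrow> card (A i) \<le> a"
    and spread: "\<And>Z. Z \<noteq> {} \<Longrightarrow> real (card {i\<in>I. Z \<subseteq> A i}) \<le> M / r ^ card Z"
    and M0: "0 \<le> M" and r0: "0 < r" and rho: "0 < \<rho>" "\<rho> \<le> 1" and t0: "0 < t"
  shows "Esum \<rho> U (\<lambda>W. real (card {i\<in>I. tv I A W i = t})) \<le> 2 ^ a * M / (\<rho> * r) ^ t"
proof -
  define P where "P = Sigma (Pow U) (\<lambda>W. {i\<in>I. tv I A W i = t})"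
  define T where "T W i = A (jstar I A W i) - W" for W i
  define F where "F p = (fst p \<union> T (fst p) (snd p), (T (fst p) (snd p), snd p))" for p
  define B where "B Z = {(T', i). (\<exists>j\<in>I. A j \<subseteq> Z) \<and> T' \<subseteq> A (cidx I A Z) \<and> card T' = t \<and> i \<in> I \<and> T' \<subseteq> A i}" for Z
  define Q where "Q = Sigma (Pow U) B"
  have finP: "finite P" unfolding P_def using finU finI by auto
  have finB: "finite (B Z)" for Z
  proof -
    have "B Z \<subseteq> Pow (A (cidx I A Z)) \<times> I" unfolding B_def by auto
    show ?thesis
    proof (cases "\<exists>j\<in>I. A j \<subseteq> Z")
      case True
      then have "cidx I A Z \<in> I" unfolding cidx_def by (rule someI2_bex) auto
      then have "finite (A (cidx I A Z))" using AU finU finite_subset by blast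
      then show ?thesis using finI \<open>B Z \<subseteq> _\<close> finite_subset by blast
    next
      case False then have "B Z = {}" unfolding B_def by auto
      then show ?thesis by simp
    qed
  qed
  have Tprops: "A (jstar I A W i) \<subseteq> W \<union> A i \<and> jstar I A W i \<in> I \<and> card (T W i) = tv I A W i
       \<and> T W i \<subseteq> U \<and> W \<inter> T W i = {} \<and> T W i \<subseteq> A i" if "i \<in> I" for W i
    using jstar_props[OF finI that, where W=W and A=A] AU unfolding T_def cand_def by auto
  have E1: "Esum \<rho> U (\<lambda>W. real (card {i\<in>I. tv I A W i = t})) = (\<Sum>(W,i)\<in>P. mu \<rho> U W)"
  proof -
    have "Esum \<rho> U (\<lambda>W. real (card {i\<in>I. tv I A W i = t}))
        = (\<Sum>W\<in>Pow U. \<Sum>i\<in>{i\<in>I. tv I A W i = t}. mu \<rho> U W)"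
      unfolding Esum_def by (simp add: mult.commute)
    also have "\<dots> = (\<Sum>(W,i)\<in>P. mu \<rho> U W)"
      unfolding P_def by (rule sum.Sigma) (use finU finI in auto)
    finally show ?thesis .
  qed
  have E2: "(\<Sum>(W,i)\<in>P. mu \<rho> U W) \<le> (\<Sum>p\<in>P. mu \<rho> U (fst (F p)) / \<rho> ^ t)"
  proof (rule sum_mono)
    fix p assume "p \<in> P"
    then obtain W i where p: "p = (W, i)" "W \<subseteq> U" "i \<in> I" "tv I A W i = t" unfolding P_def by auto
    show "(case p of (W, i) \<Rightarrow> mu \<rho> U W) \<le> mu \<rho> U (fst (F p)) / \<rho> ^ t"
      unfolding p F_def using Tprops[OF p(3), where W=W] p rho finU
      by (simp add: mu_shift)
  qed
  have injF: "inj_on F P"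
  proof (rule inj_onI)
    fix p p' assume "p \<in> P" "p' \<in> P" "F p = F p'"
    then obtain W i W' i' where p: "p = (W, i)" "i \<in> I" "p' = (W', i')" "i' \<in> I" unfolding P_def by auto
    have "W = (W \<union> T W i) - T W i" using Tprops[OF p(2), where W=W] by auto
    moreover have "W' = (W' \<union> T W' i') - T W' i'" using Tprops[OF p(4), where W=W'] by auto
    ultimately show "p = p'" using \<open>F p = F p'\<close> unfolding p F_def by auto
  qed
  have FQ: "F ` P \<subseteq> Q"
  proof
    fix q assume "q \<in> F ` P"
    then obtain W i where q: "q = F (W, i)" "W \<subseteq> U" "i \<in> I" "tv I A W i = t" unfolding P_def by auto
    define j where "j = jstar I A W i"
    define Tt where "Tt = T W i"
    define Z where "Z = W \<union> Tt"
    have j: "A j \<subseteq> W \<union> A i" "j \<in> I" "card Tt = t" "Tt \<subseteq> U" "Tt \<subseteq> A i" "Tt = A j - W"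
      using Tprops[OF q(3), where W=W] q(4) unfolding j_def Tt_def T_def by auto
    have ZU: "Z \<subseteq> U" using q j unfolding Z_def by auto
    have AjZ: "A j \<subseteq> Z" using j unfolding Z_def by auto
    define c where "c = cidx I A Z"
    have c: "c \<in> I \<and> A c \<subseteq> Z" unfolding c_def cidx_def by (rule someI[of _ j]) (use j AjZ in auto)
    have "c \<in> cand I A W i" using c j unfolding cand_def Z_def by auto
    then have "t \<le> card (A c - W)" using tv_le[OF finI] q by metis
    moreover have "A c - W \<subseteq> Tt" using c unfolding Z_def by auto
    moreover have "finite Tt" using j finU finite_subset by auto
    ultimately have "A c - W = Tt" using j by (metis card_seteq)
    then have "Tt \<subseteq> A (cidx I A Z)" unfolding c_def[symmetric] by auto
    then have "(Tt, i) \<in> B Z" unfolding B_def using j q AjZ by auto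
    then show "q \<in> Q" unfolding Q_def q F_def using ZU by (simp add: Z_def Tt_def)
  qed
  have finQ: "finite Q" unfolding Q_def using finU finB by auto
  have E3: "(\<Sum>p\<in>P. mu \<rho> U (fst (F p)) / \<rho> ^ t) = (\<Sum>q\<in>F ` P. mu \<rho> U (fst q)) / \<rho> ^ t"
    by (simp add: sum_divide_distrib sum.reindex[OF injF])
  have E4: "(\<Sum>q\<in>F ` P. mu \<rho> U (fst q)) \<le> (\<Sum>q\<in>Q. mu \<rho> U (fst q))"
    by (rule sum_mono2[OF finQ FQ]) (use rho mu_nonneg in auto)
  have E5: "(\<Sum>q\<in>Q. mu \<rho> U (fst q)) = (\<Sum>Z\<in>Pow U. mu \<rho> U Z * real (card (B Z)))"
  proof -
    have "(\<Sum>Z\<in>Pow U. mu \<rho> U Z * real (card (B Z))) = (\<Sum>Z\<in>Pow U. \<Sum>b\<in>B Z. mu \<rho> U Z)"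
      by (simp add: mult.commute)
    also have "\<dots> = (\<Sum>(Z,b)\<in>Q. mu \<rho> U Z)"
      unfolding Q_def by (rule sum.Sigma) (use finU finB in auto)
    also have "\<dots> = (\<Sum>q\<in>Q. mu \<rho> U (fst q))" by (simp add: case_prod_beta)
    finally show ?thesis by simp
  qed
  have cardB: "real (card (B Z)) \<le> 2 ^ a * M / r ^ t" for Z
  proof (cases "\<exists>j\<in>I. A j \<subseteq> Z")
    case False then have "B Z = {}" unfolding B_def by auto
    then show ?thesis using M0 r0 by simp
  next
    case True
    define c where "c = cidx I A Z"
    have cI: "c \<in> I" unfolding c_def cidx_def using True by (rule someI2_bex) auto
    define X where "X = {T'. T' \<subseteq> A c \<and> card T' = t}"
    have finAc: "finite (A c)" using AU cI finU finite_subset by blast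
    have finX: "finite X" unfolding X_def using finAc by auto
    have BZ: "B Z = Sigma X (\<lambda>T'. {i\<in>I. T' \<subseteq> A i})"
      unfolding B_def X_def c_def using True by auto
    have "real (card (B Z)) = (\<Sum>T'\<in>X. real (card {i\<in>I. T' \<subseteq> A i}))"
      unfolding BZ using finX finI by simp
    also have "\<dots> \<le> (\<Sum>T'\<in>X. M / r ^ t)"
    proof (rule sum_mono)
      fix T' assume "T' \<in> X"
      then have "T' \<noteq> {}" "card T' = t" using t0 unfolding X_def by auto
      then show "real (card {i\<in>I. T' \<subseteq> A i}) \<le> M / r ^ t" using spread by metis
    qed
    also have "\<dots> = real (card X) * (M / r ^ t)" by simp
    also have "\<dots> \<le> 2 ^ a * (M / r ^ t)"
    proof (rule mult_right_mono)
      have "card X \<le> card (Pow (A c))" unfolding X_def by (rule card_mono) (use finAc in auto)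
      also have "\<dots> = 2 ^ card (A c)" using finAc by (simp add: card_Pow)
      also have "\<dots> \<le> 2 ^ a" using Aa[OF cI] by (simp add: power_increasing)
      finally show "real (card X) \<le> 2 ^ a" by (metis of_nat_le_iff of_nat_numeral of_nat_power)
    qed (use M0 r0 in simp)
    finally show ?thesis by simp
  qed
  have E6: "(\<Sum>Z\<in>Pow U. mu \<rho> U Z * real (card (B Z))) \<le> 2 ^ a * M / r ^ t"
  proof -
    have "(\<Sum>Z\<in>Pow U. mu \<rho> U Z * real (card (B Z))) \<le> (\<Sum>Z\<in>Pow U. mu \<rho> U Z * (2 ^ a * M / r ^ t))"
      by (rule sum_mono, rule mult_left_mono[OF cardB]) (use rho mu_nonneg in auto)
    also have "\<dots> = Esum \<rho> U (\<lambda>_. 2 ^ a * M / r ^ t)" unfolding Esum_def ..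
    also have "\<dots> = 2 ^ a * M / r ^ t" using finU by (rule Esum_one)
    finally show ?thesis .
  qed
  have "Esum \<rho> U (\<lambda>W. real (card {i\<in>I. tv I A W i = t})) \<le> (2 ^ a * M / r ^ t) / \<rho> ^ t"
    using E1 E2 E3 E4 E5 E6 rho by (smt (verit) divide_right_mono zero_le_power)
  also have "\<dots> = 2 ^ a * M / (\<rho> * r) ^ t" by (simp add: power_mult_distrib)
  finally show ?thesis .
qed



definition bad :: "nat set \<Rightarrow> (nat \<Rightarrow> nat set) \<Rightarrow> nat set \<Rightarrow> real" where
  "bad I A W = (if \<exists>i\<in>I. A i \<subseteq> W then 0 else 1)"

lemma Esum_sum: "Esum \<rho> U (\<lambda>W. \<Sum>t\<in>S. f t W) = (\<Sum>t\<in>S. Esum \<rho> U (f t))"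
  unfolding Esum_def by (simp add: sum_distrib_left sum.swap[of _ S])

lemma Esum_nonneg: "0 \<le> \<rho> \<Longrightarrow> \<rho> \<le> 1 \<Longrightarrow> (\<And>W. W \<subseteq> U \<Longrightarrow> 0 \<le> f W) \<Longrightarrow> 0 \<le> Esum \<rho> U f"
  unfolding Esum_def by (rule sum_nonneg) (use mu_nonneg in auto)

lemma pow_aux: "2 * L + 3 \<le> 4 * 2 ^ L"
  by (induction L) auto

lemma pow_aux_real: "(2::real) ^ L * (1/16) ^ (2 ^ L) \<le> (1/2) ^ (L + 3)"
proof -
  have "(2::real) ^ (2 * L + 3) \<le> 2 ^ (4 * 2 ^ L)"
    by (rule power_increasing) (use pow_aux in auto)
  moreover have "(2::real) ^ (2 * L + 3) = 2 ^ L * 2 ^ (L + 3)" by (simp add: power_add[symmetric])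
  moreover have "(2::real) ^ (4 * 2 ^ L) = 16 ^ (2 ^ L)" by (simp add: power_mult)
  ultimately have "(2::real) ^ L * 2 ^ (L + 3) \<le> 16 ^ (2 ^ L)" by simp
  then show ?thesis by (simp add: field_simps power_one_over)
qed

lemma round_bound:
  assumes finU: "finite U" and finI: "finite I"
    and AU: "\<And>i. i \<in> I \<Longrightarrow> A i \<subseteq> U" and Aa: "\<And>i. i \<in> I \<Longrightarrow> card (A i) \<le> 2 ^ Suc L - 1"
    and spread: "\<And>Z. Z \<noteq> {} \<Longrightarrow> real (card {i\<in>I. Z \<subseteq> A i}) \<le> M / r ^ card Z"
    and M0: "0 \<le> M" and r0: "0 < r" and rho: "0 < \<rho>" "\<rho> \<le> 1" and big: "64 \<le> \<rho> * r"
  shows "Esum \<rho> U (\<lambda>W. real (card {i\<in>I. 2 ^ L - 1 < tv I A W i})) \<le> M * (1/2) ^ (L + 3)"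
proof -
  define a :: nat where "a = 2 ^ Suc L - 1"
  define b :: nat where "b = 2 ^ L - 1"
  have split: "real (card {i\<in>I. b < tv I A W i}) = (\<Sum>t\<in>{b<..a}. real (card {i\<in>I. tv I A W i = t}))" for W
  proof -
    have "{i\<in>I. b < tv I A W i} = (\<Union>t\<in>{b<..a}. {i\<in>I. tv I A W i = t})"
    proof -
      have "tv I A W i \<le> a" if "i \<in> I" for i
      proof -
        have "finite (A i)" using AU[OF that] finU finite_subset by blast
        then have "card (A i - W) \<le> card (A i)" by (intro card_mono) auto
        then show ?thesis using tv_le_self[OF finI that, where A=A and W=W] Aa[OF that] unfolding a_def by linarith
      qed
      then show ?thesis by auto
    qed
    moreover have "card (\<Union>t\<in>{b<..a}. {i\<in>I. tv I A W i = t}) = (\<Sum>t\<in>{b<..a}. card {i\<in>I. tv I A W i = t})"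
      by (rule card_UN_disjoint) (use finI in auto)
    ultimately have "card {i\<in>I. b < tv I A W i} = (\<Sum>t\<in>{b<..a}. card {i\<in>I. tv I A W i = t})"
      by simp
    then show ?thesis by simp
  qed
  have "Esum \<rho> U (\<lambda>W. real (card {i\<in>I. b < tv I A W i}))
      = (\<Sum>t\<in>{b<..a}. Esum \<rho> U (\<lambda>W. real (card {i\<in>I. tv I A W i = t})))"
    by (simp add: split Esum_sum)
  also have "\<dots> \<le> (\<Sum>t\<in>{b<..a}. 2 ^ a * M / (\<rho> * r) ^ t)"
    by (rule sum_mono, rule encoding[OF finU finI AU _ spread M0 r0 rho]) (use Aa a_def in auto)
  also have "\<dots> \<le> (\<Sum>t\<in>{b<..a}. M * (1/16) ^ (2 ^ L))"
  proof (rule sum_mono)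
    fix t assume t: "t \<in> {b<..a}"
    have tL: "2 ^ L \<le> t" "a \<le> 2 * t" using t unfolding a_def b_def by auto
    have "(2::real) ^ a \<le> 2 ^ (2 * t)" using tL by (intro power_increasing) auto
    also have "\<dots> = 4 ^ t" by (simp add: power_mult)
    finally have h1: "(2::real) ^ a \<le> 4 ^ t" .
    have h2: "(64::real) ^ t \<le> (\<rho> * r) ^ t" using big by (intro power_mono) auto
    have "(2::real) ^ a / (\<rho> * r) ^ t \<le> 4 ^ t / 64 ^ t"
      using h1 h2 by (intro frac_le) auto
    also have "\<dots> = (1/16) ^ t" by (simp add: power_divide[symmetric])
    also have "\<dots> \<le> (1/16) ^ (2 ^ L)" using tL by (intro power_decreasing) auto
    finally have "(2::real) ^ a / (\<rho> * r) ^ t \<le> (1/16) ^ (2 ^ L)" .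
    then have "M * (2 ^ a / (\<rho> * r) ^ t) \<le> M * (1/16) ^ (2 ^ L)" using M0 by (rule mult_left_mono)
    then show "2 ^ a * M / (\<rho> * r) ^ t \<le> M * (1/16) ^ (2 ^ L)" by (simp add: field_simps)
  qed
  also have "\<dots> = M * (2 ^ L * (1/16) ^ (2 ^ L))"
  proof -
    have "card {b<..a} = 2 ^ L" unfolding a_def b_def by simp
    then show ?thesis by simp
  qed
  also have "\<dots> \<le> M * (1/2) ^ (L + 3)" using M0 pow_aux_real by (rule mult_left_mono[rotated])
  finally show ?thesis unfolding b_def .
qed



lemma bad_le1: "bad I A W \<le> 1" and bad_ge0: "0 \<le> bad I A W"
  unfolding bad_def by auto

lemma rounds:
  assumes finU: "finite U" and M0: "0 \<le> M" and r0: "0 < r" and rho: "0 < \<rho>" "\<rho> \<le> 1"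
    and big: "64 \<le> \<rho> * r"
  shows "finite I \<Longrightarrow> (\<And>i. i \<in> I \<Longrightarrow> A i \<subseteq> U \<and> card (A i) \<le> 2 ^ L - 1)
    \<Longrightarrow> (\<And>Z. Z \<noteq> {} \<Longrightarrow> real (card {i\<in>I. Z \<subseteq> A i}) \<le> M / r ^ card Z)
    \<Longrightarrow> real (card I) * Esum (1 - (1 - \<rho>) ^ L) U (bad I A) \<le> M * (\<Sum>j<L. (1/2) ^ (j + 3))"
proof (induction L arbitrary: I A)
  case 0
  show ?case
  proof (cases "I = {}")
    case True then show ?thesis by simp
  next
    case False
    then obtain i where "i \<in> I" by auto
    have "finite (A i)" using 0(2)[of i] \<open>i \<in> I\<close> finU finite_subset by blast
    then have "A i = {}" using 0(2)[of i] \<open>i \<in> I\<close> by simp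
    then have "bad I A W = 0" for W using \<open>i \<in> I\<close> unfolding bad_def by auto
    then show ?thesis using finU by (simp add: Esum_one)
  qed
next
  case (Suc L)
  define \<delta> where "\<delta> = 1 - (1 - \<rho>) ^ L"
  have d01: "0 \<le> \<delta>" "\<delta> \<le> 1" unfolding \<delta>_def using rho by (auto simp: power_le_one)
  have dS: "1 - (1 - \<rho>) ^ Suc L = \<rho> + \<delta> - \<rho> * \<delta>" unfolding \<delta>_def by (simp add: algebra_simps)
  define b :: nat where "b = 2 ^ L - 1"
  define I' where "I' W = {i\<in>I. tv I A W i \<le> b}" for W
  define A' where "A' W i = A (jstar I A W i) - W" for W i
  define k where "k W = real (card {i\<in>I. b < tv I A W i})" for W
  define D where "D = (\<Sum>j<L. (1/2::real) ^ (j + 3))"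
  have jp: "jstar I A W i \<in> I \<and> A (jstar I A W i) \<subseteq> W \<union> A i \<and> card (A' W i) = tv I A W i" if "i \<in> I" for W i
    using jstar_props[OF Suc(2) that, where A=A and W=W] unfolding cand_def A'_def by auto
  have pw: "bad I A (W1 \<union> W2) \<le> bad (I' W1) (A' W1) W2" for W1 W2
  proof (cases "\<exists>i\<in>I' W1. A' W1 i \<subseteq> W2")
    case True
    then obtain i where i: "i \<in> I" "A' W1 i \<subseteq> W2" unfolding I'_def by auto
    have "A (jstar I A W1 i) \<subseteq> W1 \<union> W2" using i unfolding A'_def by auto
    then have "bad I A (W1 \<union> W2) = 0" using jp[OF i(1), of W1] unfolding bad_def by auto
    then show ?thesis by (simp add: bad_ge0)
  next
    case False then show ?thesis by (simp add: bad_def)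
  qed
  have IH: "real (card (I' W)) * Esum \<delta> U (bad (I' W) (A' W)) \<le> M * D" for W
    unfolding \<delta>_def D_def
  proof (rule Suc.IH)
    show "finite (I' W)" unfolding I'_def using Suc(2) by auto
  next
    fix i assume "i \<in> I' W"
    then have i: "i \<in> I" "tv I A W i \<le> b" unfolding I'_def by auto
    show "A' W i \<subseteq> U \<and> card (A' W i) \<le> 2 ^ L - 1"
      using jp[OF i(1), of W] Suc(3)[of "jstar I A W i"] i unfolding A'_def b_def by auto
  next
    fix Z :: "nat set" assume "Z \<noteq> {}"
    have "{i\<in>I' W. Z \<subseteq> A' W i} \<subseteq> {i\<in>I. Z \<subseteq> A i}"
      unfolding I'_def A'_def using jp by fastforce
    then have "card {i\<in>I' W. Z \<subseteq> A' W i} \<le> card {i\<in>I. Z \<subseteq> A i}"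
      by (rule card_mono[rotated]) (use Suc(2) in auto)
    then show "real (card {i\<in>I' W. Z \<subseteq> A' W i}) \<le> M / r ^ card Z"
      using Suc(4)[OF \<open>Z \<noteq> {}\<close>] by linarith
  qed
  have cardsplit: "real (card I) = real (card (I' W)) + k W" for W
  proof -
    have "I = I' W \<union> {i\<in>I. b < tv I A W i}" "I' W \<inter> {i\<in>I. b < tv I A W i} = {}"
      unfolding I'_def by auto
    then have "card I = card (I' W) + card {i\<in>I. b < tv I A W i}"
      using Suc(2) by (metis card_Un_disjoint finite_Un)
    then show ?thesis unfolding k_def by simp
  qed
  have pw2: "real (card I) * Esum \<delta> U (bad (I' W) (A' W)) \<le> k W + M * D" for W
  proof -
    have e01: "0 \<le> Esum \<delta> U (bad (I' W) (A' W))" "Esum \<delta> U (bad (I' W) (A' W)) \<le> 1"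
      using Esum_nonneg[OF d01, of U "bad (I' W) (A' W)"] bad_ge0
        Esum_mono[OF d01, of U "bad (I' W) (A' W)" "\<lambda>_. 1"] bad_le1 Esum_one[OF finU] by auto
    have k0: "0 \<le> k W" unfolding k_def by simp
    have "k W * Esum \<delta> U (bad (I' W) (A' W)) \<le> k W" using e01 k0 by (simp add: mult_left_le)
    then show ?thesis using IH[of W] cardsplit[of W] by (simp add: algebra_simps)
  qed
  have "Esum (1 - (1 - \<rho>) ^ Suc L) U (bad I A)
      = Esum \<rho> U (\<lambda>W1. Esum \<delta> U (\<lambda>W2. bad I A (W1 \<union> W2)))"
    unfolding dS by (rule Esum_union[OF finU, symmetric])
  also have "\<dots> \<le> Esum \<rho> U (\<lambda>W1. Esum \<delta> U (bad (I' W1) (A' W1)))"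
    using rho d01 pw by (intro Esum_mono) auto
  finally have step1: "Esum (1 - (1 - \<rho>) ^ Suc L) U (bad I A) \<le> Esum \<rho> U (\<lambda>W1. Esum \<delta> U (bad (I' W1) (A' W1)))" .
  have "real (card I) * Esum (1 - (1 - \<rho>) ^ Suc L) U (bad I A)
      \<le> real (card I) * Esum \<rho> U (\<lambda>W1. Esum \<delta> U (bad (I' W1) (A' W1)))"
    using step1 by (rule mult_left_mono) simp
  also have "\<dots> = Esum \<rho> U (\<lambda>W1. real (card I) * Esum \<delta> U (bad (I' W1) (A' W1)))"
    by (simp add: Esum_cmult)
  also have "\<dots> \<le> Esum \<rho> U (\<lambda>W1. k W1 + M * D)"
    using rho pw2 by (intro Esum_mono) auto
  also have "\<dots> = Esum \<rho> U k + M * D"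
    by (simp add: Esum_add Esum_one[OF finU])
  also have "Esum \<rho> U k \<le> M * (1/2) ^ (L + 3)"
    unfolding k_def b_def
    by (rule round_bound[OF finU Suc(2) _ _ Suc(4) M0 r0 rho big]) (use Suc(3) in auto)
  finally show ?case unfolding D_def by (simp add: algebra_simps)
qed



lemma geo_sum: "(\<Sum>j<L. (1/2::real) ^ (j + 3)) = 1/4 - (1/2) ^ (L + 2)"
proof (induction L)
  case 0 then show ?case by simp
next
  case (Suc L)
  have "(\<Sum>j<Suc L. (1/2::real) ^ (j + 3)) = 1/4 - (1/2) ^ (L + 2) + (1/2) ^ (L + 3)"
    using Suc by simp
  also have "\<dots> = 1/4 - (1/2) ^ (Suc L + 2)" by (simp add: power_add field_simps)
  finally show ?case .
qed

lemma fiber_card: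
  fixes U W :: "nat set" and q c :: nat
  assumes finU: "finite U" and WU: "W \<subseteq> U" and c: "c < q"
  shows "card {g \<in> Pi\<^sub>E U (\<lambda>_. {..<q}). {u\<in>U. g u = c} = W} = (q - 1) ^ card (U - W)"
proof -
  define \<Phi> where "\<Phi> h = (\<lambda>u. if u \<in> W then c else h u)" for h :: "nat \<Rightarrow> nat"
  define H where "H = Pi\<^sub>E (U - W) (\<lambda>_. {..<q} - {c})"
  have eq: "{g \<in> Pi\<^sub>E U (\<lambda>_. {..<q}). {u\<in>U. g u = c} = W} = \<Phi> ` H"
  proof
    show "\<Phi> ` H \<subseteq> {g \<in> Pi\<^sub>E U (\<lambda>_. {..<q}). {u\<in>U. g u = c} = W}"
    proof
      fix g assume "g \<in> \<Phi> ` H"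
      then obtain h where h: "h \<in> H" "g = \<Phi> h" by auto
      have "g \<in> Pi\<^sub>E U (\<lambda>_. {..<q})"
        using h WU c unfolding H_def \<Phi>_def PiE_iff extensional_def by auto
      moreover have "{u\<in>U. g u = c} = W"
        using h WU unfolding H_def \<Phi>_def PiE_iff by auto
      ultimately show "g \<in> {g \<in> Pi\<^sub>E U (\<lambda>_. {..<q}). {u\<in>U. g u = c} = W}" by simp
    qed
  next
    show "{g \<in> Pi\<^sub>E U (\<lambda>_. {..<q}). {u\<in>U. g u = c} = W} \<subseteq> \<Phi> ` H"
    proof
      fix g assume g: "g \<in> {g \<in> Pi\<^sub>E U (\<lambda>_. {..<q}). {u\<in>U. g u = c} = W}"
      have "restrict g (U - W) \<in> H" using g unfolding H_def PiE_iff by auto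
      moreover have "g = \<Phi> (restrict g (U - W))"
      proof
        fix u show "g u = \<Phi> (restrict g (U - W)) u"
          using g WU unfolding \<Phi>_def PiE_iff extensional_def by auto
      qed
      ultimately show "g \<in> \<Phi> ` H" by blast
    qed
  qed
  have inj: "inj_on \<Phi> H"
  proof (rule inj_onI)
    fix h h' assume hh: "h \<in> H" "h' \<in> H" "\<Phi> h = \<Phi> h'"
    show "h = h'"
    proof
      fix u
      show "h u = h' u"
      proof (cases "u \<in> U - W")
        case True then show ?thesis using fun_cong[OF hh(3), of u] unfolding \<Phi>_def by auto
      next
        case False then show ?thesis using hh unfolding H_def PiE_iff extensional_def by auto
      qed
    qed
  qed
  have "card (\<Phi> ` H) = card H" using inj by (rule card_image)
  also have "\<dots> = (q - 1) ^ card (U - W)"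
    unfolding H_def using finU c by (simp add: card_PiE)
  finally show ?thesis using eq by simp
qed

lemma color_sum:
  assumes finU: "finite U" and c: "c < q"
  shows "(\<Sum>g\<in>Pi\<^sub>E U (\<lambda>_. {..<q}). f {u\<in>U. g u = c}) = real q ^ card U * Esum (1 / real q) U f"
proof -
  define G where "G = Pi\<^sub>E U (\<lambda>_. {..<q})"
  have finG: "finite G" unfolding G_def using finU by (simp add: finite_PiE)
  have "(\<Sum>g\<in>G. f {u\<in>U. g u = c}) = (\<Sum>W\<in>Pow U. \<Sum>g\<in>{g\<in>G. {u\<in>U. g u = c} = W}. f {u\<in>U. g u = c})"
    by (rule sum.group[symmetric]) (use finG finU in auto)
  also have "\<dots> = (\<Sum>W\<in>Pow U. real ((q - 1) ^ card (U - W)) * f W)"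
  proof (rule sum.cong)
    fix W assume "W \<in> Pow U"
    then have "(\<Sum>g\<in>{g\<in>G. {u\<in>U. g u = c} = W}. f {u\<in>U. g u = c}) = (\<Sum>g\<in>{g\<in>G. {u\<in>U. g u = c} = W}. f W)"
      by (intro sum.cong) auto
    also have "\<dots> = real (card {g\<in>G. {u\<in>U. g u = c} = W}) * f W" by simp
    also have "\<dots> = real ((q - 1) ^ card (U - W)) * f W"
      unfolding G_def using fiber_card[OF finU _ c, of W] \<open>W \<in> Pow U\<close> by simp
    finally show "(\<Sum>g\<in>{g\<in>G. {u\<in>U. g u = c} = W}. f {u\<in>U. g u = c}) = real ((q - 1) ^ card (U - W)) * f W" .
  qed simp
  also have "\<dots> = real q ^ card U * Esum (1 / real q) U f"
    unfolding Esum_def sum_distrib_left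
  proof (rule sum.cong)
    fix W assume W: "W \<in> Pow U"
    have q0: "0 < q" using c by simp
    have fW: "finite W" using W finU finite_subset by auto
    have cU: "card U = card W + card (U - W)" using W finU
      by (metis PowD card_Diff_subset card_mono le_add_diff_inverse fW)
    have "real q ^ card U * (mu (1 / real q) U W * f W)
        = (real q ^ card W * (1 / real q) ^ card W) * (real q ^ card (U - W) * (1 - 1 / real q) ^ card (U - W)) * f W"
      unfolding mu_def cU by (simp add: power_add algebra_simps)
    also have "\<dots> = (real q - 1) ^ card (U - W) * f W"
      using q0 by (simp add: power_mult_distrib[symmetric] field_simps)
    finally have X: "real q ^ card U * (mu (1 / real q) U W * f W) = (real q - 1) ^ card (U - W) * f W" .
    have Y: "real ((q - 1) ^ card (U - W)) = (real q - 1) ^ card (U - W)" using q0 by (simp add: of_nat_diff)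
    show "real ((q - 1) ^ card (U - W)) * f W = real q ^ card U * (mu (1 / real q) U W * f W)"
      unfolding Y by (rule sym[OF X])
  qed simp
  finally show ?thesis unfolding G_def .
qed



theorem lemma2:
  "\<exists>\<alpha>::real. \<alpha> > 1 \<and>
    (\<forall>(p::nat) (k::nat) (n::nat) (l::nat) (S :: nat \<Rightarrow> nat set).
       p \<ge> 2 \<longrightarrow> k \<ge> 1 \<longrightarrow> n \<ge> 1 \<longrightarrow>
       (\<forall>i<l. S i \<subseteq> {1..n} \<and> card (S i) = k) \<longrightarrow>
       real l > (\<alpha> * real p * log 2 (real (p * k))) ^ k \<longrightarrow>
       r_spread n k (\<alpha> * real p * log 2 (real (p * k))) l S \<longrightarrow>
       (\<exists>I. I \<subseteq> {..<l} \<and> card I = p \<and>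
            (\<forall>i\<in>I. \<forall>j\<in>I. i \<noteq> j \<longrightarrow> S i \<inter> S j = {})))"
proof (intro exI[of _ "128::real"] conjI allI impI)
  show "(1::real) < 128" by simp
  fix p k n l :: nat and S :: "nat \<Rightarrow> nat set"
  assume hp: "2 \<le> p" and hk: "1 \<le> k" and hn: "1 \<le> n"
    and hS: "\<forall>i<l. S i \<subseteq> {1..n} \<and> card (S i) = k"
    and hl: "(128 * real p * log 2 (real (p * k))) ^ k < real l"
    and hsp: "r_spread n k (128 * real p * log 2 (real (p * k))) l S"
  define r where "r = 128 * real p * log 2 (real (p * k))"
  define q where "q = 2 * p"
  define U where "U = {1..n}"
  have finU: "finite U" unfolding U_def by simp
  obtain m where m: "2 ^ m \<le> k" "k < 2 ^ (m + 1)" using ex_power_ivl1[of 2 k] hk by auto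
  define L where "L = m + 1"
  have L1: "1 \<le> L" unfolding L_def by simp
  have kL: "k \<le> 2 ^ L - 1" using m unfolding L_def by simp
  have pk: "2 ^ L \<le> p * k"
  proof -
    have "2 ^ L = 2 * 2 ^ m" unfolding L_def by simp
    also have "\<dots> \<le> p * k" using m(1) hp by (intro mult_mono) auto
    finally show ?thesis .
  qed
  have Llog: "real L \<le> log 2 (real (p * k))"
  proof -
    have "0 < real (p * k)" using hp hk by simp
    moreover have "(2::real) ^ L \<le> real (p * k)"
      using pk by (metis of_nat_le_iff of_nat_numeral of_nat_power)
    then have "(2::real) powr real L \<le> real (p * k)"
      by (simp add: powr_realpow)
    ultimately show ?thesis by (simp add: le_log_iff)
  qed
  have rL: "128 * real p * real L \<le> r"
    unfolding r_def using Llog hp by (intro mult_left_mono) auto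
  have r0: "0 < r"
  proof -
    have "0 < 128 * real p * real L" using hp L1 by simp
    then show ?thesis using rL by linarith
  qed
  define y where "y = 1 - 1 / real q"
  have q2: "2 \<le> q" using hp unfolding q_def by simp
  have y0: "0 < y" "y < 1" unfolding y_def using q2 by (auto simp: field_simps)
  define \<rho> where "\<rho> = 1 - y powr (1 / real L)"
  have rhoL: "(1 - \<rho>) ^ L = y"
  proof -
    have "(1 - \<rho>) ^ L = (y powr (1 / real L)) ^ L" unfolding \<rho>_def by simp
    also have "\<dots> = y powr (real L * (1 / real L))" using y0 by (simp add: powr_power)
    also have "\<dots> = y" using L1 y0 by simp
    finally show ?thesis .
  qed
  have rho1: "\<rho> \<le> 1" unfolding \<rho>_def by simp
  have Lrho: "1 / real q \<le> real L * \<rho>"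
  proof -
    have "1 + real L * (- \<rho>) \<le> (1 + - \<rho>) ^ L" using rho1 by (intro Bernoulli_inequality) simp
    then show ?thesis using rhoL unfolding y_def by simp
  qed
  have rho0: "0 < \<rho>"
  proof -
    have "0 < 1 / real q" using q2 by simp
    then have "0 < real L * \<rho>" using Lrho by linarith
    then show ?thesis using L1 by (simp add: zero_less_mult_iff)
  qed
  have big: "64 \<le> \<rho> * r"
  proof -
    have "64 = 64 * (real q * (1 / real q))" using q2 by simp
    also have "\<dots> \<le> 64 * (real q * (real L * \<rho>))" using Lrho by (intro mult_left_mono) auto
    also have "\<dots> = \<rho> * (128 * real p * real L)" unfolding q_def by simp
    also have "\<dots> \<le> \<rho> * r" using rL rho0 by (intro mult_left_mono) auto
    finally show ?thesis .
  qed
  define M where "M = r ^ k"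
  have M0: "0 \<le> M" unfolding M_def using r0 by simp
  have Ml: "M < real l" using hl unfolding M_def r_def .
  have spread: "real (card {i\<in>{..<l}. Z \<subseteq> S i}) \<le> M / r ^ card Z" if "Z \<noteq> {}" for Z
  proof (cases "Z \<subseteq> {1..n}")
    case True
    have "real (card {i. i < l \<and> Z \<subseteq> S i}) \<le> r powr (real k - real (card Z))"
      using hsp True that unfolding r_spread_def r_def by blast
    also have "\<dots> = M / r ^ card Z" unfolding M_def using r0 by (simp add: powr_diff powr_realpow)
    finally show ?thesis by simp
  next
    case False
    have "\<not> Z \<subseteq> S i" if "i < l" for i
      using hS that False by (meson subset_trans)
    then have e: "{i\<in>{..<l}. Z \<subseteq> S i} = {}" by auto
    show ?thesis unfolding e using M0 r0 by simp
  qed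
  have R: "real (card {..<l}) * Esum (1 - (1 - \<rho>) ^ L) U (bad {..<l} S) \<le> M * (\<Sum>j<L. (1/2) ^ (j + 3))"
  proof -
    have cond: "\<And>i. i \<in> {..<l} \<Longrightarrow> S i \<subseteq> U \<and> card (S i) \<le> 2 ^ L - 1"
      using hS kL unfolding U_def by auto
    show ?thesis by (rule rounds[OF finU M0 r0 rho0 rho1 big finite_lessThan cond spread])
  qed
  define Pb where "Pb = Esum (1 / real q) U (bad {..<l} S)"
  have Pb: "Pb \<le> 1/4"
  proof -
    have "real l * Pb \<le> M * (1/4 - (1/2) ^ (L + 2))"
      using R rhoL unfolding Pb_def y_def geo_sum by simp
    also have "\<dots> \<le> M * (1/4)" using M0 by (intro mult_left_mono) auto
    also have "\<dots> \<le> real l * (1/4)" using Ml by simp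
    finally have "real l * Pb \<le> real l * (1/4)" .
    moreover have "0 < real l" using Ml M0 by simp
    ultimately show ?thesis by simp
  qed
  define G where "G = Pi\<^sub>E U (\<lambda>_. {..<q})"
  have finG: "finite G" unfolding G_def using finU by (simp add: finite_PiE)
  have cardG: "card G = q ^ n" unfolding G_def U_def by (simp add: card_PiE)
  define nb where "nb g = (\<Sum>c<q. bad {..<l} S {u\<in>U. g u = c})" for g
  have tot: "(\<Sum>g\<in>G. nb g) = real q * (real q ^ n * Pb)"
  proof -
    have "(\<Sum>g\<in>G. nb g) = (\<Sum>c<q. \<Sum>g\<in>G. bad {..<l} S {u\<in>U. g u = c})"
      unfolding nb_def by (rule sum.swap)
    also have "\<dots> = (\<Sum>c<q. real q ^ n * Pb)"
      unfolding G_def Pb_def by (rule sum.cong) (use color_sum[OF finU] in \<open>auto simp: U_def\<close>)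
    finally show ?thesis by simp
  qed
  obtain g where g: "g \<in> G" "nb g \<le> real p"
  proof (rule ccontr)
    assume "\<not> thesis"
    then have all: "\<forall>g\<in>G. real p < nb g" using that by force
    have "0 < card G" using cardG q2 by simp
    then have Gne: "G \<noteq> {}" by auto
    have "(\<Sum>g\<in>G. real p) < (\<Sum>g\<in>G. nb g)" by (rule sum_strict_mono[OF finG Gne]) (use all in auto)
    then have "real (q ^ n) * real p < real q * (real q ^ n * Pb)" using tot cardG by simp
    moreover have "real q * (real q ^ n * Pb) \<le> real q * (real q ^ n * (1/4))"
      using Pb by (intro mult_left_mono) auto
    moreover have "real q * (real q ^ n * (1/4)) = real (q ^ n) * real p / 2" unfolding q_def by simp
    moreover have "0 < real (q ^ n)" using q2 by simp
    moreover have "0 < real (q ^ n) * real p" using q2 hp by simp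
    ultimately show False by linarith
  qed
  define Good where "Good = {c\<in>{..<q}. \<exists>i\<in>{..<l}. S i \<subseteq> {u\<in>U. g u = c}}"
  have nbg: "nb g = real (card ({..<q} - Good))"
  proof -
    have "nb g = (\<Sum>c\<in>{..<q}. if c \<in> {..<q} - Good then 1 else 0)"
      unfolding nb_def bad_def Good_def by (rule sum.cong) auto
    also have "\<dots> = real (card ({..<q} - Good))"
    proof -
      have e: "{..<q} \<inter> {x. x < q \<and> x \<notin> Good} = {..<q} - Good" by auto
      show ?thesis by (subst sum.If_cases) (auto simp: e)
    qed
    finally show ?thesis .
  qed
  have cGood: "p \<le> card Good"
  proof -
    have sub: "Good \<subseteq> {..<q}" unfolding Good_def by auto
    then have f: "finite Good" using finite_subset by blast
    have c1: "card ({..<q} - Good) = q - card Good" using card_Diff_subset[OF f sub] by simp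
    have c2: "card Good \<le> q" using card_mono[OF _ sub] by simp
    have "card ({..<q} - Good) + card Good = q" using c1 c2 by simp
    then show ?thesis using g nbg unfolding q_def by linarith
  qed
  obtain C where C: "C \<subseteq> Good" "card C = p" "finite C" using obtain_subset_with_card_n[OF cGood] by blast
  define idx where "idx c = (SOME i. i < l \<and> S i \<subseteq> {u\<in>U. g u = c})" for c
  have idx: "idx c < l \<and> S (idx c) \<subseteq> {u\<in>U. g u = c}" if "c \<in> C" for c
  proof -
    have "\<exists>i. i < l \<and> S i \<subseteq> {u\<in>U. g u = c}" using that C(1) unfolding Good_def by auto
    then show ?thesis unfolding idx_def by (rule someI_ex)
  qed
  have Sne: "S i \<noteq> {}" if "i < l" for i using hS that hk by (metis card.empty not_one_le_zero)
  have inj: "inj_on idx C"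
  proof (rule inj_onI)
    fix c c' assume cc: "c \<in> C" "c' \<in> C" "idx c = idx c'"
    obtain u where "u \<in> S (idx c)" using Sne idx[OF cc(1)] by blast
    then show "c = c'" using idx[OF cc(1)] idx[OF cc(2)] cc(3) by auto
  qed
  show "\<exists>I. I \<subseteq> {..<l} \<and> card I = p \<and> (\<forall>i\<in>I. \<forall>j\<in>I. i \<noteq> j \<longrightarrow> S i \<inter> S j = {})"
  proof (intro exI[of _ "idx ` C"] conjI ballI impI)
    show "idx ` C \<subseteq> {..<l}" using idx by auto
    show "card (idx ` C) = p" using card_image[OF inj] C by simp
    fix i j assume ij: "i \<in> idx ` C" "j \<in> idx ` C" "i \<noteq> j"
    then obtain c c' where cc: "c \<in> C" "c' \<in> C" "i = idx c" "j = idx c'" by auto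
    then have "c \<noteq> c'" using ij(3) by auto
    moreover have "S i \<subseteq> {u\<in>U. g u = c}" "S j \<subseteq> {u\<in>U. g u = c'}" using idx cc by auto
    ultimately show "S i \<inter> S j = {}" by auto
  qed
qed


end
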